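(* Let $\omega>0$, $\bar r>0$, $\bar v>0$ and $T>0$ be such that $e^{AT}\begin{bmatrix}-\bar r\\ \bar v\end{bmatrix}=\begin{bmatrix}\bar r\\ \bar v\end{bmatrix}$ with $A=\begin{bmatrix}0&1\\ \omega^2&0\end{bmatrix}$ (so that $\bar v/\omega-\bar r>0$ and $e^{\omega T}=\frac{\bar v/\omega+\bar r}{\bar v/\omega-\bar r}$). For $\varepsilon_p\in\mathbb R$ define $$\eta(\varepsilon_p)=\frac{\varepsilon_p-\bar r+\sqrt{\varepsilon_p^2-2\bar r\varepsilon_p+(\bar v/\omega)^2}}{\bar v/\omega-\bar r},\quad \delta_1(\varepsilon_p)=\bar r\Big(\eta(\varepsilon_p)+\tfrac1{\eta(\varepsilon_p)}-2\Big),\quad \delta_2(\varepsilon_p)=\bar r\omega\Big(\tfrac1{\eta(\varepsilon_p)}-\eta(\varepsilon_p)\Big),$$ $\varepsilon_p^+=\varepsilon_p+\delta_1(\varepsilon_p)$, $\delta_\alpha(\varepsilon_p)=e^{-2\alpha T}\varepsilon_p^+-\varepsilon_p$, and $\xi=\dfrac{\bar r\omega}{\bar v/\omega-\bar r}$. Then for all $\varepsilon_p\in\mathbb R$, $$|\delta_1(\varepsilon_p)|\le\frac{2\xi}{\omega}|\varepsilon_p|,\qquad |\delta_2(\varepsilon_p)|\le 2\xi|\varepsilon_p|,$$ and, for every $\alpha>\omega$, $$|\delta_\alpha(\varepsilon_p)|\le\big(1-e^{-(\omega+2\alpha)T}\big)|\varepsilon_p|.$$ *)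

theory Defs
  imports "HOL-Analysis.Analysis"
begin

text \<open>Matrix power and matrix exponential for square real matrices
 (the library's exp on vec types is componentwise, so we define the
 matrix exponential as its power series).\<close>

fun matpow :: "real^'n^'n \<Rightarrow> nat \<Rightarrow> real^'n^'n" where
  "matpow M 0 = mat 1"
| "matpow M (Suc k) = M ** matpow M k"

definition mexp :: "real^'n^'n \<Rightarrow> real^'n^'n" where
  "mexp M = (\<Sum>k. (1 / fact k) *\<^sub>R matpow M k)"

definition Amat :: "real \<Rightarrow> real^2^2" where
  "Amat \<omega> = vector [vector [0, 1], vector [\<omega>^2, 0]]"

definition eta :: "real \<Rightarrow> real \<Rightarrow> real \<Rightarrow> real \<Rightarrow> real" where
  "eta \<omega> r v e = (e - r + sqrt (e^2 - 2*r*e + (v/\<omega>)^2)) / (v/\<omega> - r)"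

definition delta1 :: "real \<Rightarrow> real \<Rightarrow> real \<Rightarrow> real \<Rightarrow> real" where
  "delta1 \<omega> r v e = r * (eta \<omega> r v e + 1 / eta \<omega> r v e - 2)"

definition delta2 :: "real \<Rightarrow> real \<Rightarrow> real \<Rightarrow> real \<Rightarrow> real" where
  "delta2 \<omega> r v e = r * \<omega> * (1 / eta \<omega> r v e - eta \<omega> r v e)"

definition eps_plus :: "real \<Rightarrow> real \<Rightarrow> real \<Rightarrow> real \<Rightarrow> real" where
  "eps_plus \<omega> r v e = e + delta1 \<omega> r v e"

definition delta_alpha :: "real \<Rightarrow> real \<Rightarrow> real \<Rightarrow> real \<Rightarrow> real \<Rightarrow> real \<Rightarrow> real" where
  "delta_alpha \<omega> r v T \<alpha> e = exp (-2*\<alpha>*T) * eps_plus \<omega> r v e - e"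

definition xi :: "real \<Rightarrow> real \<Rightarrow> real \<Rightarrow> real" where
  "xi \<omega> r v = r * \<omega> / (v/\<omega> - r)"

end

theory Submission imports Defs begin

lemma matrix_sub_ldistrib: fixes A :: "real^'n^'m" shows "A ** (X - Y) = A ** X - A ** Y"
  by (simp add: matrix_matrix_mult_def vec_eq_iff sum_subtractf algebra_simps)

lemma mexp_formula:
  fixes s :: real and B :: "real^2^2"
  assumes BB: "B ** B = (s^2) *\<^sub>R mat 1" and s: "s \<noteq> 0"
  shows "mexp B = exp s *\<^sub>R ((1/2) *\<^sub>R (mat 1 + (1/s) *\<^sub>R B))
                + exp (-s) *\<^sub>R ((1/2) *\<^sub>R (mat 1 - (1/s) *\<^sub>R B))"
proof -
  define P where "P = (1/2) *\<^sub>R (mat 1 + (1/s) *\<^sub>R B)"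
  define N where "N = (1/2) *\<^sub>R (mat 1 - (1/s) *\<^sub>R B)"
  have BP: "B ** P = s *\<^sub>R P"
    unfolding P_def using s
    by (simp add: matrix_scalar_ac scalar_matrix_assoc[symmetric] matrix_add_ldistrib BB scaleR_add_right algebra_simps power2_eq_square)
  have BN: "B ** N = (-s) *\<^sub>R N"
    unfolding N_def using s
    by (simp add: matrix_scalar_ac scalar_matrix_assoc[symmetric] matrix_sub_ldistrib BB scaleR_diff_right algebra_simps power2_eq_square)
  have pw: "matpow B k = s^k *\<^sub>R P + (-s)^k *\<^sub>R N" for k
  proof (induction k)
    case 0
    then show ?case by (simp add: P_def N_def vec_eq_iff add_divide_distrib[symmetric])
  next
    case (Suc k)
    have "matpow B (Suc k) = B ** (s^k *\<^sub>R P + (-s)^k *\<^sub>R N)" using Suc by simp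
    also have "\<dots> = s^k *\<^sub>R (B ** P) + (-s)^k *\<^sub>R (B ** N)"
      by (simp add: matrix_add_ldistrib matrix_scalar_ac scalar_matrix_assoc[symmetric])
    also have "\<dots> = (s^k * s) *\<^sub>R P + ((-s)^k * (-s)) *\<^sub>R N"
      by (simp only: BP BN scaleR_scaleR)
    finally show ?case by (simp only: power_Suc2)
  qed
  have "(\<lambda>k. (1 / fact k) *\<^sub>R matpow B k) = (\<lambda>k. (s^k /\<^sub>R fact k) *\<^sub>R P + ((-s)^k /\<^sub>R fact k) *\<^sub>R N)"
    by (rule ext) (simp only: pw scaleR_add_right scaleR_scaleR real_scaleR_def divide_inverse mult_1_left mult_1_right mult.commute)
  moreover have "(\<lambda>k. (s^k /\<^sub>R fact k) *\<^sub>R P + ((-s)^k /\<^sub>R fact k) *\<^sub>R N) sums (exp s *\<^sub>R P + exp (-s) *\<^sub>R N)"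
    by (intro sums_add sums_scaleR_left exp_converges)
  ultimately have "mexp B = exp s *\<^sub>R P + exp (-s) *\<^sub>R N" unfolding mexp_def by (simp add: sums_unique[symmetric])
  then show ?thesis by (simp only: P_def N_def)
qed

lemma AA: fixes \<omega> T :: real
  shows "(T *\<^sub>R Amat \<omega>) ** (T *\<^sub>R Amat \<omega>) = ((\<omega>*T)^2) *\<^sub>R mat 1"
  by (simp add: vec_eq_iff forall_2 matrix_matrix_mult_def sum_2 Amat_def mat_def power2_eq_square)

lemma expcond:
  fixes \<omega> r v T :: real
  assumes "\<omega> > 0" "T > 0"
    and h: "mexp (T *\<^sub>R Amat \<omega>) *v vector [-r, v] = vector [r, v]"
  shows "exp (\<omega>*T) * (v/\<omega> - r) = v/\<omega> + r"
proof -
  have s: "\<omega>*T \<noteq> 0" using assms by simp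
  note mf = mexp_formula[OF AA s]
  have h1: "(mexp (T *\<^sub>R Amat \<omega>) *v vector [-r, v]) $ 1 = r" using h by simp
  have h2: "(mexp (T *\<^sub>R Amat \<omega>) *v vector [-r, v]) $ 2 = v" using h by simp
  define E where "E = exp (\<omega>*T)"
  have Ei: "exp (-(\<omega>*T)) = 1/E" unfolding E_def by (simp add: exp_minus field_simps)
  have Ep: "E > 0" unfolding E_def by simp
  have e1: "E * (v - \<omega>*r) / 2 - (v + \<omega>*r) / (2*E) = \<omega>*r"
    using h1 assms(1,2) Ep unfolding mf Ei E_def[symmetric]
    by (simp add: matrix_vector_mult_def sum_2 Amat_def mat_def, simp add: field_simps, metis (no_types, opaque_lifting) less_numeral_extra(3) mult_cancel_left ring_class.ring_distribs(1))
  have e2: "E * (v - \<omega>*r) / 2 + (v + \<omega>*r) / (2*E) = v"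
    using h2 assms(1,2) Ep unfolding mf Ei E_def[symmetric]
    by (simp add: matrix_vector_mult_def sum_2 Amat_def mat_def, simp add: field_simps power2_eq_square, metis (no_types, opaque_lifting) less_numeral_extra(3) mult_cancel_left ring_class.ring_distribs(1))
  have "E * (v - \<omega>*r) = v + \<omega>*r" using e1 e2 by linarith
  then show ?thesis unfolding E_def[symmetric] using assms(1) by (simp add: field_simps)
qed

lemma eta_props:
  fixes \<omega> r v e :: real
  assumes "\<omega> > 0" "r > 0" "v/\<omega> > r"
  shows "eta \<omega> r v e > 0"
    "e = (eta \<omega> r v e - 1) * ((v/\<omega> - r) * eta \<omega> r v e + v/\<omega> + r) / (2 * eta \<omega> r v e)"
proof -
  define u where "u = v/\<omega>"
  define d where "d = u - r"
  define S where "S = sqrt (e^2 - 2*r*e + u^2)"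
  define n where "n = eta \<omega> r v e"
  have d: "d > 0" using assms unfolding d_def u_def by simp
  have Sq: "e^2 - 2*r*e + u^2 = (e-r)^2 + d*(u+r)" unfolding d_def by (simp add: algebra_simps power2_eq_square)
  have pos: "d*(u+r) > 0" using d assms unfolding u_def by simp
  have nn: "0 \<le> e^2 - 2*r*e + u^2" using pos by (subst Sq) (simp add: add_nonneg_nonneg)
  have S2: "S^2 = (e-r)^2 + d*(u+r)" unfolding S_def using nn Sq by simp
  have "S \<ge> 0" unfolding S_def using nn by simp
  have "\<bar>e - r\<bar> < S"
  proof -
    have "\<bar>e - r\<bar>^2 < S^2" using S2 pos by simp
    then show ?thesis using \<open>S \<ge> 0\<close> by (meson abs_ge_zero power_less_imp_less_base)
  qed
  then have num: "e - r + S > 0" by linarith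
  have nd: "n * d = e - r + S" unfolding n_def eta_def d_def u_def S_def using d unfolding d_def u_def by simp
  have npos: "n > 0" using nd num d by (metis zero_less_mult_pos2)
  then show "eta \<omega> r v e > 0" unfolding n_def .
  have "(n*d - (e-r))^2 = S^2" using nd by simp
  then have "n^2*d^2 - 2*(e-r)*n*d = d*(u+r)" using S2 by (simp add: algebra_simps power2_eq_square)
  then have "d * (n^2*d - 2*(e-r)*n) = d*(u+r)" by (simp add: algebra_simps power2_eq_square)
  then have "n^2*d - 2*(e-r)*n = u+r" using d by simp
  then have "e = (n^2*d + 2*r*n - u - r) / (2*n)" using npos by (simp add: field_simps)
  also have "\<dots> = (n - 1) * (d * n + u + r) / (2 * n)" unfolding d_def by (simp add: algebra_simps power2_eq_square)
  finally show "e = (eta \<omega> r v e - 1) * ((v/\<omega> - r) * eta \<omega> r v e + v/\<omega> + r) / (2 * eta \<omega> r v e)"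
    unfolding n_def d_def u_def .
qed

lemma bounds:
  fixes \<omega> r v e p q :: real
  assumes w: "\<omega> > 0" and r: "r > 0" and ur: "v/\<omega> > r"
    and p: "p * (v/\<omega> + r) = v/\<omega> - r" and q: "0 < q" "q \<le> p"
  shows "\<bar>delta1 \<omega> r v e\<bar> \<le> 2 * xi \<omega> r v / \<omega> * \<bar>e\<bar>"
    "\<bar>delta2 \<omega> r v e\<bar> \<le> 2 * xi \<omega> r v * \<bar>e\<bar>"
    "\<bar>q * eps_plus \<omega> r v e - e\<bar> \<le> (1 - p*q) * \<bar>e\<bar>"
proof -
  define u where "u = v/\<omega>"
  define d where "d = u - r"
  define n where "n = eta \<omega> r v e"
  define a where "a = \<bar>n - 1\<bar>"
  have d: "d > 0" using ur unfolding d_def u_def by simp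
  have n: "n > 0" unfolding n_def using eta_props(1)[OF w r ur] .
  have ee: "e = (n - 1) * (d * n + u + r) / (2 * n)"
    unfolding n_def d_def u_def using eta_props(2)[OF w r ur] .
  have a0: "a \<ge> 0" unfolding a_def by simp
  have pos: "d * n + u + r > 0" using d n r ur unfolding u_def by (simp add: add_pos_pos)
  have ae: "\<bar>e\<bar> = a * (d * n + u + r) / (2 * n)"
    unfolding ee a_def using pos n by (simp add: abs_mult abs_divide)
  have xi: "xi \<omega> r v = r * \<omega> / d" unfolding xi_def d_def u_def ..
  have d1: "delta1 \<omega> r v e = r * (n - 1)^2 / n"
    unfolding delta1_def n_def[symmetric] using n by (simp add: field_simps power2_eq_square)
  have d2: "delta2 \<omega> r v e = r * \<omega> * (1 - n) * (1 + n) / n"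
    unfolding delta2_def n_def[symmetric] using n by (simp add: field_simps power2_eq_square)
  show "\<bar>delta1 \<omega> r v e\<bar> \<le> 2 * xi \<omega> r v / \<omega> * \<bar>e\<bar>"
  proof -
    have k: "a * d \<le> d * n + u + r"
    proof (cases "n \<ge> 1")
      case True
      then have "a = n - 1" unfolding a_def by simp
      then have "a * d = d * n - d" by (simp add: right_diff_distrib mult.commute)
      then show ?thesis using r ur u_def d_def by linarith
    next
      case False
      then have "a = 1 - n" unfolding a_def by simp
      then have "a * d = d - d * n" by (simp add: right_diff_distrib mult.commute)
      moreover have "0 < d * n" using d n by simp
      ultimately show ?thesis using r ur u_def d_def by linarith
    qed
    have "\<bar>delta1 \<omega> r v e\<bar> = r * (a * a) / n"
      unfolding d1 a_def using n r by (simp add: abs_mult power2_eq_square abs_divide abs_mult_self_eq)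
    also have "\<dots> = (r * a / (d * n)) * (a * d)"
      using n d by (simp add: field_simps)
    also have "\<dots> \<le> (r * a / (d * n)) * (d * n + u + r)"
      using k r a0 d n by (intro mult_left_mono) auto
    also have "\<dots> = 2 * xi \<omega> r v / \<omega> * \<bar>e\<bar>"
      unfolding xi ae using w d n by (simp add: field_simps)
    finally show ?thesis .
  qed
  show "\<bar>delta2 \<omega> r v e\<bar> \<le> 2 * xi \<omega> r v * \<bar>e\<bar>"
  proof -
    have k: "(1 + n) * d \<le> d * n + u + r" using r unfolding d_def by (simp add: algebra_simps)
    have "\<bar>delta2 \<omega> r v e\<bar> = r * \<omega> * a * (1 + n) / n"
      unfolding d2 a_def using n r w by (simp add: abs_mult abs_divide abs_minus_commute)
    also have "\<dots> = (r * \<omega> * a / (d * n)) * ((1 + n) * d)"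
      using n d by (simp add: field_simps)
    also have "\<dots> \<le> (r * \<omega> * a / (d * n)) * (d * n + u + r)"
      using k r a0 d n w by (intro mult_left_mono) auto
    also have "\<dots> = 2 * xi \<omega> r v * \<bar>e\<bar>"
      unfolding xi ae using w d n by (simp add: field_simps)
    finally show ?thesis .
  qed
  show "\<bar>q * eps_plus \<omega> r v e - e\<bar> \<le> (1 - p*q) * \<bar>e\<bar>"
  proof -
    define F where "F = (n - 1) * (u + r) / (2 * n)"
    have ur0: "u + r > 0" using r ur unfolding u_def by simp
    have pd: "p = d / (u + r)" using p ur0 unfolding d_def u_def by (simp add: field_simps)
    have p0: "p > 0" using pd d ur0 by simp
    have p1: "p \<le> 1" using pd d ur0 r unfolding d_def by simp
    have pu: "p * (u + r) = d" using p unfolding d_def u_def .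
    have "F * (p * n + 1) = (n - 1) * ((u + r) * (p * n + 1)) / (2 * n)"
      unfolding F_def using n by (simp add: field_simps)
    also have "(u + r) * (p * n + 1) = (p * (u + r)) * n + (u + r)" by (simp add: algebra_simps)
    also have "\<dots> = d * n + u + r" unfolding pu by simp
    finally have eF: "e = F * (p * n + 1)" using ee by simp
    have "F * (n + p) = (n - 1) * ((u + r) * n + p * (u + r)) / (2 * n)"
      unfolding F_def using n by (simp add: field_simps)
    also have "\<dots> = (n - 1) * ((u + r) * n + d) / (2 * n)" unfolding pu ..
    also have "\<dots> = (n - 1) * (d * n + u + r) / (2 * n) + r * (n - 1)^2 / n"
      unfolding d_def using n by (simp add: field_simps power2_eq_square)
    also have "\<dots> = eps_plus \<omega> r v e"
      unfolding eps_plus_def d1 using ee by simp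
    finally have epF: "eps_plus \<omega> r v e = F * (n + p)" ..
    have "q * eps_plus \<omega> r v e - e = F * (q*n + q*p - p*n - 1)"
      unfolding epF by (subst eF) (simp add: algebra_simps)
    then have L: "\<bar>q * eps_plus \<omega> r v e - e\<bar> = \<bar>F\<bar> * \<bar>q*n + q*p - p*n - 1\<bar>"
      by (simp add: abs_mult)
    have R: "(1 - p*q) * \<bar>e\<bar> = \<bar>F\<bar> * ((1 - p*q) * (p*n + 1))"
      unfolding eF using p0 n by (simp add: abs_mult)
    have f1: "q*n \<le> p*n" using q n by (simp add: mult_right_mono)
    have f2: "p*p*q*n \<le> q*n"
    proof -
      have "p*p \<le> 1" using p0 p1 by (simp add: mult_le_one)
      then have "(q*n) * (p*p) \<le> (q*n) * 1" using q n by (intro mult_left_mono) auto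
      then show ?thesis by (simp add: mult_ac)
    qed
    have f3: "q*p \<le> 1" using q p0 p1 by (simp add: mult_le_one)
    have f4: "p*n \<ge> 0" using p0 n by simp
    have ex: "(1 - p*q) * (p*n + 1) = p*n + 1 - p*p*q*n - q*p" by (simp add: algebra_simps)
    have "\<bar>q*n + q*p - p*n - 1\<bar> \<le> (1 - p*q) * (p*n + 1)"
      unfolding ex abs_le_iff using f1 f2 f3 f4 by linarith
    then show ?thesis unfolding L R by (simp add: mult_left_mono)
  qed
qed

theorem lemma2:
  fixes \<omega> r v T :: real
  assumes "\<omega> > 0" "r > 0" "v > 0" "T > 0"
    and "mexp (T *\<^sub>R Amat \<omega>) *v vector [-r, v] = vector [r, v]"
  shows "\<forall>e::real.
           \<bar>delta1 \<omega> r v e\<bar> \<le> 2 * xi \<omega> r v / \<omega> * \<bar>e\<bar>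
         \<and> \<bar>delta2 \<omega> r v e\<bar> \<le> 2 * xi \<omega> r v * \<bar>e\<bar>
         \<and> (\<forall>\<alpha>>\<omega>. \<bar>delta_alpha \<omega> r v T \<alpha> e\<bar> \<le> (1 - exp (-(\<omega> + 2*\<alpha>)*T)) * \<bar>e\<bar>)"
proof (intro allI conjI impI)
  fix e :: real
  have E: "exp (\<omega>*T) * (v/\<omega> - r) = v/\<omega> + r" using expcond[OF assms(1,4,5)] .
  have "v/\<omega> + r > 0" using assms(1,2,3) by (intro add_pos_pos divide_pos_pos)
  then have "exp (\<omega>*T) * (v/\<omega> - r) > 0" using E by simp
  then have ur: "v/\<omega> > r" by (simp add: zero_less_mult_iff)
  define p where "p = exp (-(\<omega>*T))"
  have p: "p * (v/\<omega> + r) = v/\<omega> - r"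
    unfolding p_def E[symmetric] by (simp add: exp_minus field_simps)
  have pp: "p > 0" unfolding p_def by simp
  show "\<bar>delta1 \<omega> r v e\<bar> \<le> 2 * xi \<omega> r v / \<omega> * \<bar>e\<bar>"
    using bounds(1)[OF assms(1,2) ur p pp order_refl] .
  show "\<bar>delta2 \<omega> r v e\<bar> \<le> 2 * xi \<omega> r v * \<bar>e\<bar>"
    using bounds(2)[OF assms(1,2) ur p pp order_refl] .
  fix \<alpha> :: real
  assume al: "\<alpha> > \<omega>"
  define q where "q = exp (-2*\<alpha>*T)"
  have q0: "q > 0" unfolding q_def by simp
  have "-2*\<alpha>*T \<le> -(\<omega>*T)" using al assms(1,4) by (simp add: mult_right_mono)
  then have qp: "q \<le> p" unfolding q_def p_def by simp
  have pq: "exp (-(\<omega> + 2*\<alpha>)*T) = p * q" unfolding p_def q_def by (simp add: exp_add[symmetric] algebra_simps)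
  show "\<bar>delta_alpha \<omega> r v T \<alpha> e\<bar> \<le> (1 - exp (-(\<omega> + 2*\<alpha>)*T)) * \<bar>e\<bar>"
    unfolding pq delta_alpha_def q_def[symmetric] using bounds(3)[OF assms(1,2) ur p q0 qp] .
qed

end
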